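(* Let $\mathbf d=(d_1,d_2)\in\mathbb{N}^2\setminus\{(0,0)\}$ and let $Q_{\mathbf d}$ be the set of quads of bi-degree exactly $\mathbf d$. Then $Q_{\mathbf d}$ is finite and nonempty and its elements have pairwise distinct sizes. Listing its elements in order of decreasing size, the sizes form a sequence of consecutive integers, and the points of $\mathbb{Z}[\gamma]$ they represent form a strictly decreasing sequence of positive real numbers. The element of largest size has size $d_1+d_2$ and represents $d_1+d_2\gamma^{-1}$; the element of smallest size represents $|d_1-d_2\gamma^{-1}|$. Every element of $Q_{\mathbf d}$ other than these two represents a point $m+n\gamma^{-1}$ ($m,n\in\mathbb{Z}$) with $|m|\le d_1$ and $|n|\le d_2-1$.
   Context: Let $f\colon\mathbb{Z}\to\mathbb{Z}$ be defined by $f(0)=f(1)=1$, $f(i+2)=f(i+1)+f(i)$ for all $i\in\mathbb{Z}$; $\gamma=(1+\sqrt5)/2$; $\mathbb{Z}[\gamma]=\mathbb{Z}\oplus\mathbb{Z}\gamma^{-1}$. A quad is a tuple $q=(i;a,b,c)$ of non-negative integers with $a\ge1$. It represents $\alpha\in\mathbb{Z}[\gamma]$ if $\alpha=a\gamma^{-i}+b\gamma^{-i-1}+c\gamma^{-i-2}$. Its bi-degree is $(d_1(q),d_2(q))$ with $d_1(q)=af(i-2)+bf(i-1)+cf(i)$ and $d_2(q)=af(i-1)+bf(i)+cf(i+1)$, and its size is $a+b+c$. *)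

theory Defs
  imports Complex_Main "HOL-Number_Theory.Fib"
begin

text \<open>The two-sided Fibonacci function f : Z -> Z with f(0)=f(1)=1 and
 f(i+2)=f(i+1)+f(i) for all integers i; explicitly f(i) = F(i+1) where F is the
 usual (negafibonacci-extended) Fibonacci sequence.\<close>
definition fz :: "int \<Rightarrow> int" where
  "fz i = (if i \<ge> -1 then int (fib (nat (i + 1)))
           else (-1) ^ (nat (-(i + 1)) + 1) * int (fib (nat (-(i + 1)))))"

lemma fz_0: "fz 0 = 1" by (simp add: fz_def)
lemma fz_1: "fz 1 = 1" by (simp add: fz_def numeral_2_eq_2)

definition gam :: real where "gam = (1 + sqrt 5) / 2"

type_synonym quad = "nat \<times> nat \<times> nat \<times> nat"

definition is_quad :: "quad \<Rightarrow> bool" where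
  "is_quad q = (case q of (i, a, b, c) \<Rightarrow> a \<ge> 1)"

definition qval :: "quad \<Rightarrow> real" where
  "qval q = (case q of (i, a, b, c) \<Rightarrow>
     real a * gam powi (- int i) + real b * gam powi (- int i - 1)
     + real c * gam powi (- int i - 2))"

definition qd1 :: "quad \<Rightarrow> int" where
  "qd1 q = (case q of (i, a, b, c) \<Rightarrow>
     int a * fz (int i - 2) + int b * fz (int i - 1) + int c * fz (int i))"

definition qd2 :: "quad \<Rightarrow> int" where
  "qd2 q = (case q of (i, a, b, c) \<Rightarrow>
     int a * fz (int i - 1) + int b * fz (int i) + int c * fz (int i + 1))"

definition qsize :: "quad \<Rightarrow> nat" where
  "qsize q = (case q of (i, a, b, c) \<Rightarrow> a + b + c)"

definition Qd :: "nat \<Rightarrow> nat \<Rightarrow> quad set" where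
  "Qd d1 d2 = {q. is_quad q \<and> qd1 q = int d1 \<and> qd2 q = int d2}"

end

theory Submission
  imports Defs
begin

definition F :: "nat \<Rightarrow> int" where "F n = fz (int n - 2)"

lemma F0[simp]: "F 0 = 1" by (simp add: F_def fz_def)
lemma F1[simp]: "F (Suc 0) = 0" by (simp add: F_def fz_def)
lemma FS: "F (Suc n) = int (fib n)"
  by (simp add: F_def fz_def)
lemma FSS: "F (Suc (Suc n)) = int (fib (Suc n))"
  by (simp add: FS)
lemma F2[simp]: "F (Suc (Suc 0)) = 1" by (simp add: FS)
lemma F_rec: "F (Suc (Suc n)) = F (Suc n) + F n"
  by (cases n) (simp_all add: FS)
lemma F_nonneg: "F n \<ge> 0"
  by (cases n) (auto simp: FS)
lemma F_pos: "n \<ge> 2 \<Longrightarrow> F n \<ge> 1"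
proof -
  assume "n \<ge> 2" then obtain m where "n = Suc (Suc m)" by (metis add_2_eq_Suc le_Suc_ex)
  then show ?thesis by (simp add: FSS fib_neq_0_nat Suc_le_eq)
qed

fun UV :: "int \<Rightarrow> int \<Rightarrow> nat \<Rightarrow> int \<times> int" where
  "UV x y 0 = (x, y)"
| "UV x y (Suc i) = (snd (UV x y i) - fst (UV x y i), fst (UV x y i))"

definition U where "U x y i = fst (UV x y i)"
definition V where "V x y i = snd (UV x y i)"

lemma U0[simp]: "U x y 0 = x" and V0[simp]: "V x y 0 = y"
  and US[simp]: "U x y (Suc i) = V x y i - U x y i"
  and VS[simp]: "V x y (Suc i) = U x y i"
  by (simp_all add: U_def V_def)

lemma UV_char1: "U x y i * F i + V x y i * F (Suc i) = x \<and>
   U x y i * F (Suc i) + V x y i * F (Suc (Suc i)) = y"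
proof (induction i)
  case 0 then show ?case by simp
next
  case (Suc i)
  then show ?case by (simp add: F_rec[of i] F_rec[of "Suc i"] algebra_simps)
qed

lemma UV_char2: "u * F i + v * F (Suc i) = x \<Longrightarrow>
   u * F (Suc i) + v * F (Suc (Suc i)) = y \<Longrightarrow> u = U x y i \<and> v = V x y i"
proof (induction i arbitrary: u v)
  case 0 then show ?case by simp
next
  case (Suc i)
  have "v * F i + (u + v) * F (Suc i) = x"
    using Suc.prems(1) by (simp add: F_rec[of i] algebra_simps)
  moreover have "v * F (Suc i) + (u + v) * F (Suc (Suc i)) = y"
    using Suc.prems(2) by (simp add: F_rec[of i] F_rec[of "Suc i"] algebra_simps)
  ultimately have "v = U x y i \<and> u + v = V x y i" using Suc.IH by blast
  then show ?case by simp
qed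

lemma Qd_iff: "(i, a, b, c) \<in> Qd d1 d2 \<longleftrightarrow>
   a \<ge> 1 \<and> int a + int c = U d1 d2 i \<and> int b + int c = V d1 d2 i"
proof -
  have e1: "fz (int i - 2) = F i" by (simp add: F_def)
  have e2: "fz (int i - 1) = F (Suc i)" by (simp add: F_def)
  have e3: "fz (int i) = F (Suc (Suc i))" by (simp add: F_def)
  have "int (Suc (Suc (Suc i))) - 2 = int i + 1" by simp
  then have e4: "fz (int i + 1) = F (Suc (Suc (Suc i)))" by (simp only: F_def)
  have "qd1 (i, a, b, c) = int a * F i + int b * F (Suc i) + int c * F (Suc (Suc i))"
    by (simp add: qd1_def e1 e2 e3)
  also have "\<dots> = (int a + int c) * F i + (int b + int c) * F (Suc i)"
    unfolding F_rec[of i] by (simp add: algebra_simps)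
  finally have q1: "qd1 (i, a, b, c) = (int a + int c) * F i + (int b + int c) * F (Suc i)" .
  have "qd2 (i, a, b, c) = int a * F (Suc i) + int b * F (Suc (Suc i)) + int c * F (Suc (Suc (Suc i)))"
    by (simp add: qd2_def e2 e3 e4)
  also have "\<dots> = (int a + int c) * F (Suc i) + (int b + int c) * F (Suc (Suc i))"
    unfolding F_rec[of "Suc i"] by (simp add: algebra_simps)
  finally have q2: "qd2 (i, a, b, c) = (int a + int c) * F (Suc i) + (int b + int c) * F (Suc (Suc i))" .
  show ?thesis
    unfolding Qd_def is_quad_def mem_Collect_eq prod.case q1 q2
    using UV_char1[of d1 d2 i] UV_char2[of "int a + int c" i "int b + int c" d1 d2]
    by metis
qed

definition t :: real where "t = gam powi (-1)"

lemma gam_pos: "gam > 0" by (simp add: gam_def add_pos_nonneg)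
lemma gam_sq: "gam * gam = gam + 1"
proof -
  have s5: "sqrt 5 * sqrt 5 = 5" by simp
  show ?thesis unfolding gam_def by (simp add: field_simps algebra_simps s5)
qed
lemma t_inv: "t = inverse gam" by (simp add: t_def)
lemma t_pos: "t > 0" using gam_pos by (simp add: t_inv)
lemma t_sq: "t * t = 1 - t"
proof -
  have tg: "t * gam = 1" using gam_pos by (simp add: t_inv)
  have "t * t = t * t * (gam * gam - gam)" using gam_sq by simp
  also have "\<dots> = (t * gam) * (t * gam) - t * (t * gam)" by (simp add: algebra_simps)
  also have "\<dots> = 1 - t" using tg by simp
  finally show ?thesis .
qed
lemma t_lt1: "t < 1" using t_sq t_pos
  by (metis diff_gt_0_iff_gt mult_pos_pos)

lemma gam_pow_neg: "gam powi (- int i) = t ^ i"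
  by (simp add: t_inv power_int_minus power_inverse)
lemma gam_pow_neg1: "gam powi (- int i - 1) = t ^ Suc i"
proof -
  have eq: "- int i - 1 = - int (Suc i)" by simp
  show ?thesis by (subst eq) (rule gam_pow_neg)
qed
lemma gam_pow_neg2: "gam powi (- int i - 2) = t ^ Suc (Suc i)"
proof -
  have eq: "- int i - 2 = - int (Suc (Suc i))" by simp
  show ?thesis by (subst eq) (rule gam_pow_neg)
qed

lemma qval_eq: "qval (i, a, b, c) = real a * t ^ i + real b * t ^ Suc i + real c * t ^ Suc (Suc i)"
  by (simp add: qval_def gam_pow_neg gam_pow_neg1 gam_pow_neg2)

definition PP :: "int \<Rightarrow> int \<Rightarrow> nat \<Rightarrow> bool" where
  "PP x y i = ((U x y i < 0 \<and> V x y i \<ge> 0) \<or> (V x y i < 0 \<and> U x y i > 0))"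

lemma PP_Suc: "PP x y i \<Longrightarrow> PP x y (Suc i)"
  unfolding PP_def by auto

lemma PP_mono: "PP x y i \<Longrightarrow> i \<le> j \<Longrightarrow> PP x y j"
proof -
  assume p: "PP x y i" and "i \<le> j"
  from \<open>i \<le> j\<close> show "PP x y j"
  proof (induction j rule: dec_induct)
    case base show ?case using p .
  next
    case (step n) then show ?case using PP_Suc by blast
  qed
qed

lemma PP_invalid: "PP x y j \<Longrightarrow> U x y j \<ge> 1 \<Longrightarrow> V x y j \<ge> 0 \<Longrightarrow> False"
  unfolding PP_def by auto

lemma nonneg_between:
  assumes "U x y i \<ge> 0" "U x y j \<ge> 1" "V x y j \<ge> 0" "i \<le> k" "k \<le> j"
  shows "U x y k \<ge> 0"
proof -
  have "\<forall>n. i + n \<le> j \<longrightarrow> U x y (i + n) \<ge> 0"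
  proof
    fix n show "i + n \<le> j \<longrightarrow> U x y (i + n) \<ge> 0"
    proof (induction n)
      case 0 then show ?case using assms(1) by simp
    next
      case (Suc n)
      show ?case
      proof
        assume le: "i + Suc n \<le> j"
        then have h: "U x y (i + n) \<ge> 0" using Suc by simp
        show "U x y (i + Suc n) \<ge> 0"
        proof (rule ccontr)
          assume "\<not> U x y (i + Suc n) \<ge> 0"
          then have "PP x y (i + Suc n)" using h by (simp add: PP_def)
          then have "PP x y j" using le PP_mono by blast
          then show False using assms(2,3) PP_invalid by blast
        qed
      qed
    qed
  qed
  then show ?thesis using assms(4,5) by (metis le_add_diff_inverse)
qed

definition SS where "SS x y k = U x y k + V x y k"
definition AA where "AA x y k = t ^ k * (of_int (U x y k) + of_int (V x y k) * t)"

lemma SS_Suc: "SS x y (Suc k) = V x y k" by (simp add: SS_def)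
lemma AA_Suc: "AA x y (Suc k) = AA x y k - 2 * of_int (U x y k) * t ^ Suc k"
proof -
  have "AA x y (Suc k) = t ^ k * (t * of_int (V x y k) - t * of_int (U x y k) + of_int (U x y k) * (t * t))"
    by (simp add: AA_def algebra_simps)
  also have "\<dots> = AA x y k - 2 * of_int (U x y k) * t ^ Suc k"
    unfolding t_sq by (simp add: AA_def algebra_simps)
  finally show ?thesis .
qed

lemma chain:
  assumes "\<And>k. i \<le> k \<Longrightarrow> k < j \<Longrightarrow> U x y k \<ge> 0" "i \<le> j"
  shows "SS x y j \<le> SS x y i \<and> AA x y j \<le> AA x y i"
  using assms(2,1)
proof (induction j rule: dec_induct)
  case base then show ?case by simp
next
  case (step n)
  have u: "U x y n \<ge> 0" using step by simp
  have "SS x y (Suc n) \<le> SS x y n" using u by (simp add: SS_def)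
  moreover have "AA x y (Suc n) \<le> AA x y n"
    using u t_pos by (simp add: AA_Suc)
  ultimately show ?case using step by force
qed

lemma q_val:
  assumes "(i, a, b, c) \<in> Qd d1 d2"
  shows "qval (i, a, b, c) = AA (int d1) (int d2) i - 2 * real c * t ^ Suc i"
proof -
  from assms have u: "U (int d1) (int d2) i = int a + int c" and v: "V (int d1) (int d2) i = int b + int c"
    by (auto simp: Qd_iff)
  have "qval (i, a, b, c) = t ^ i * (real a + real b * t + real c * (t * t))"
    by (simp add: qval_eq algebra_simps)
  also have "\<dots> = AA (int d1) (int d2) i - 2 * real c * t ^ Suc i"
    unfolding t_sq AA_def u v by (simp add: algebra_simps)
  finally show ?thesis .
qed

lemma q_size:
  assumes "(i, a, b, c) \<in> Qd d1 d2"
  shows "int (qsize (i, a, b, c)) = SS (int d1) (int d2) i - int c"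
  using assms by (auto simp: Qd_iff qsize_def SS_def)

lemma mono_blocks:
  assumes q: "(i, a, b, c) \<in> Qd d1 d2" and q': "(j, a', b', c') \<in> Qd d1 d2" and ij: "i < j"
  shows "qsize (j, a', b', c') < qsize (i, a, b, c) \<and> qval (j, a', b', c') < qval (i, a, b, c)"
proof -
  let ?U = "U (int d1) (int d2)" and ?V = "V (int d1) (int d2)"
  let ?S = "SS (int d1) (int d2)" and ?A = "AA (int d1) (int d2)"
  from q have ui: "?U i = int a + int c" "?V i = int b + int c" "a \<ge> 1" by (auto simp: Qd_iff)
  from q' have uj: "?U j = int a' + int c'" "?V j = int b' + int c'" "a' \<ge> 1" by (auto simp: Qd_iff)
  have nn: "?U k \<ge> 0" if "Suc i \<le> k" "k < j" for k
    using nonneg_between[of "int d1" "int d2" i j k] ui uj that by simp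
  have ch: "?S j \<le> ?S (Suc i) \<and> ?A j \<le> ?A (Suc i)"
    using chain[of "Suc i" j "int d1" "int d2"] nn ij by simp
  have "int (qsize (j, a', b', c')) = ?S j - int c'" by (rule q_size[OF q'])
  also have "\<dots> \<le> ?V i" using ch SS_Suc by simp
  also have "\<dots> < ?S i - int c" using ui by (simp add: SS_def)
  also have "\<dots> = int (qsize (i, a, b, c))" by (rule q_size[OF q, symmetric])
  finally have s: "qsize (j, a', b', c') < qsize (i, a, b, c)" by simp
  have "qval (j, a', b', c') = ?A j - 2 * real c' * t ^ Suc j" by (rule q_val[OF q'])
  also have "\<dots> \<le> ?A j" using t_pos by simp
  also have "\<dots> \<le> ?A i - 2 * of_int (?U i) * t ^ Suc i" using ch AA_Suc by simp
  also have "\<dots> < ?A i - 2 * real c * t ^ Suc i"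
  proof -
    have "real c < of_int (?U i)" using ui by simp
    then show ?thesis using t_pos by simp
  qed
  also have "\<dots> = qval (i, a, b, c)" by (rule q_val[OF q, symmetric])
  finally show ?thesis using s by simp
qed

lemma mono_same:
  assumes q: "(i, a, b, c) \<in> Qd d1 d2" and q': "(i, a', b', c') \<in> Qd d1 d2" and cc: "c < c'"
  shows "qsize (i, a', b', c') < qsize (i, a, b, c) \<and> qval (i, a', b', c') < qval (i, a, b, c)"
proof -
  have "int (qsize (i, a', b', c')) < int (qsize (i, a, b, c))"
    using q_size[OF q] q_size[OF q'] cc by simp
  moreover have "qval (i, a', b', c') < qval (i, a, b, c)"
    using q_val[OF q] q_val[OF q'] cc t_pos by simp
  ultimately show ?thesis by simp
qed

lemma same_key:
  assumes q: "(i, a, b, c) \<in> Qd d1 d2" and q': "(i, a', b', c) \<in> Qd d1 d2"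
  shows "a' = a \<and> b' = b"
  using assms by (auto simp: Qd_iff)

lemma mono_gen:
  assumes q: "q \<in> Qd d1 d2" and q': "q' \<in> Qd d1 d2" and ne: "q \<noteq> q'"
  shows "(qsize q' < qsize q \<and> qval q' < qval q) \<or> (qsize q < qsize q' \<and> qval q < qval q')"
proof -
  obtain i a b c where qq: "q = (i, a, b, c)" by (cases q) auto
  obtain j a' b' c' where qq': "q' = (j, a', b', c')" by (cases q') auto
  show ?thesis
  proof (cases "i = j")
    case True
    show ?thesis
    proof (cases "c = c'")
      case True
      then show ?thesis using same_key[of i a b c d1 d2 a' b'] q q' ne qq qq' \<open>i = j\<close> by auto
    next
      case False
      then show ?thesis using mono_same[of i a b c d1 d2 a' b' c'] mono_same[of i a' b' c' d1 d2 a b c]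
          q q' qq qq' \<open>i = j\<close> by (cases "c < c'") auto
    qed
  next
    case False
    then show ?thesis using mono_blocks[of i a b c d1 d2 j a' b' c'] mono_blocks[of j a' b' c' d1 d2 i a b c]
        q q' qq qq' by (cases "i < j") auto
  qed
qed

lemma size_bound:
  assumes q: "(i, a, b, c) \<in> Qd d1 d2"
  shows "qsize (i, a, b, c) \<le> d1 + d2"
proof -
  from q have ui: "U (int d1) (int d2) i = int a + int c" "V (int d1) (int d2) i = int b + int c" "a \<ge> 1"
    by (auto simp: Qd_iff)
  have nn: "U (int d1) (int d2) k \<ge> 0" if "0 \<le> k" "k < i" for k
    using nonneg_between[of "int d1" "int d2" 0 i k] ui that by simp
  have "SS (int d1) (int d2) i \<le> SS (int d1) (int d2) 0"
    using chain[of 0 i "int d1" "int d2"] nn by simp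
  then have "int (qsize (i, a, b, c)) \<le> int d1 + int d2"
    using q_size[OF q] by (simp add: SS_def)
  then show ?thesis by simp
qed

lemma smaller:
  assumes q: "(i, a, b, c) \<in> Qd d1 d2" and b: "b \<ge> 1"
  shows "\<exists>q'' \<in> Qd d1 d2. qsize q'' + 1 = qsize (i, a, b, c)"
proof -
  let ?U = "U (int d1) (int d2)" and ?V = "V (int d1) (int d2)"
  from q have ui: "?U i = int a + int c" "?V i = int b + int c" "a \<ge> 1" by (auto simp: Qd_iff)
  show ?thesis
  proof (cases "a \<ge> 2")
    case True
    have "(i, a - 1, b - 1, c + 1) \<in> Qd d1 d2" using ui True b by (simp add: Qd_iff)
    moreover have "qsize (i, a - 1, b - 1, c + 1) + 1 = qsize (i, a, b, c)"
      using True b by (simp add: qsize_def)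
    ultimately show ?thesis by blast
  next
    case False
    then have a1: "a = 1" using ui by simp
    show ?thesis
    proof (cases "b \<ge> 2")
      case True
      have "(Suc i, b - 1, 1 + c, 0) \<in> Qd d1 d2" using ui True a1 by (simp add: Qd_iff)
      moreover have "qsize (Suc i, b - 1, 1 + c, 0) + 1 = qsize (i, a, b, c)"
        using True a1 by (simp add: qsize_def)
      ultimately show ?thesis by blast
    next
      case False
      then have b1: "b = 1" using b by simp
      have "(Suc (Suc i), 1 + c, 0, 0) \<in> Qd d1 d2" using ui a1 b1 by (simp add: Qd_iff)
      moreover have "qsize (Suc (Suc i), 1 + c, 0, 0) + 1 = qsize (i, a, b, c)"
        using a1 b1 by (simp add: qsize_def)
      ultimately show ?thesis by blast
    qed
  qed
qed

lemma b0_min: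
  assumes q: "(i, a, 0, c) \<in> Qd d1 d2" and q': "q' \<in> Qd d1 d2"
  shows "qsize (i, a, 0, c) \<le> qsize q'"
proof -
  let ?U = "U (int d1) (int d2)" and ?V = "V (int d1) (int d2)"
  from q have ui: "?U i = int a + int c" "?V i = int c" "a \<ge> 1" by (auto simp: Qd_iff)
  obtain j a' b' c' where qq': "q' = (j, a', b', c')" by (cases q') auto
  from q' qq' have uj: "?U j = int a' + int c'" "?V j = int b' + int c'" "a' \<ge> 1" by (auto simp: Qd_iff)
  consider "j < i" | "j = i" | "i < j" by arith
  then show ?thesis
  proof cases
    case 1 then show ?thesis using mono_blocks[of j a' b' c' d1 d2 i a 0 c] q q' qq' by simp
  next
    case 2
    then have "c' \<le> c" using ui uj by simp
    then show ?thesis using q_size[OF q] q_size[of j a' b' c' d1 d2] q' qq' 2 by simp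
  next
    case 3
    have "?U (Suc i) \<ge> 0" using nonneg_between[of "int d1" "int d2" i j "Suc i"] ui uj 3 by simp
    then show ?thesis using ui by simp
  qed
qed

lemma conj_UV: "t ^ i * (of_int (U x y i) - of_int (V x y i) * t) = (-1) ^ i * (of_int x - of_int y * t)"
proof (induction i)
  case 0 then show ?case by simp
next
  case (Suc i)
  have "t ^ Suc i * (of_int (U x y (Suc i)) - of_int (V x y (Suc i)) * t)
     = t ^ i * (t * of_int (V x y i) - of_int (U x y i) * (t + t * t))"
    by (simp add: algebra_simps)
  also have "\<dots> = - (t ^ i * (of_int (U x y i) - of_int (V x y i) * t))"
    unfolding t_sq by (simp add: algebra_simps)
  finally show ?case using Suc by simp
qed

lemma t_pow: "t ^ k = (-1) ^ k * (of_int (F k) - of_int (F (Suc k)) * t)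
   \<and> t ^ Suc k = (-1) ^ Suc k * (of_int (F (Suc k)) - of_int (F (Suc (Suc k))) * t)"
proof (induction k)
  case 0 then show ?case by simp
next
  case (Suc k)
  have "t ^ Suc (Suc k) = t ^ k * (t * t)" by (simp add: algebra_simps)
  also have "\<dots> = t ^ k - t ^ Suc k" unfolding t_sq by (simp add: algebra_simps)
  also have "\<dots> = (-1) ^ Suc (Suc k) * (of_int (F (Suc (Suc k))) - of_int (F (Suc (Suc (Suc k)))) * t)"
    using Suc unfolding F_rec[of k] F_rec[of "Suc k"] by (simp add: algebra_simps)
  finally have h: "t ^ Suc (Suc k) = (-1) ^ Suc (Suc k) * (of_int (F (Suc (Suc k))) - of_int (F (Suc (Suc (Suc k)))) * t)" .
  show ?case using Suc.IH h by blast
qed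

lemma qd_F:
  "qd1 (i, a, b, c) = int a * F i + int b * F (Suc i) + int c * F (Suc (Suc i))"
  "qd2 (i, a, b, c) = int a * F (Suc i) + int b * F (Suc (Suc i)) + int c * F (Suc (Suc (Suc i)))"
proof -
  have e1: "fz (int i - 2) = F i" by (simp add: F_def)
  have e2: "fz (int i - 1) = F (Suc i)" by (simp add: F_def)
  have e3: "fz (int i) = F (Suc (Suc i))" by (simp add: F_def)
  have "int (Suc (Suc (Suc i))) - 2 = int i + 1" by simp
  then have e4: "fz (int i + 1) = F (Suc (Suc (Suc i)))" by (simp only: F_def)
  show "qd1 (i, a, b, c) = int a * F i + int b * F (Suc i) + int c * F (Suc (Suc i))"
    by (simp add: qd1_def e1 e2 e3)
  show "qd2 (i, a, b, c) = int a * F (Suc i) + int b * F (Suc (Suc i)) + int c * F (Suc (Suc (Suc i)))"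
    by (simp add: qd2_def e2 e3 e4)
qed

lemma mn_repr:
  assumes q: "(i, a, b, c) \<in> Qd d1 d2" and b: "b \<ge> 1" and ic: "i \<ge> 1 \<or> c \<ge> 1"
  shows "\<exists>m n :: int. qval (i, a, b, c) = real_of_int m + real_of_int n * gam powi (-1) \<and>
          \<bar>m\<bar> \<le> int d1 \<and> \<bar>n\<bar> \<le> int d2 - 1"
proof -
  from q have a: "a \<ge> 1" and d1: "qd1 (i, a, b, c) = int d1" and d2: "qd2 (i, a, b, c) = int d2"
    by (auto simp: Qd_def is_quad_def)
  define s :: int where "s = (-1) ^ i"
  have sabs: "\<bar>s\<bar> = 1" by (simp add: s_def power_abs)
  define m where "m = s * (int a * F i - int b * F (Suc i) + int c * F (Suc (Suc i)))"
  define n where "n = s * (- int a * F (Suc i) + int b * F (Suc (Suc i)) - int c * F (Suc (Suc (Suc i))))"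
  have p0: "t ^ i = of_int s * (of_int (F i) - of_int (F (Suc i)) * t)"
    using conjunct1[OF t_pow[of i]] by (simp add: s_def)
  have p1: "t ^ Suc i = - of_int s * (of_int (F (Suc i)) - of_int (F (Suc (Suc i))) * t)"
    using conjunct2[OF t_pow[of i]] by (simp add: s_def)
  have p2: "t ^ Suc (Suc i) = of_int s * (of_int (F (Suc (Suc i))) - of_int (F (Suc (Suc (Suc i)))) * t)"
    using conjunct2[OF t_pow[of "Suc i"]] by (simp add: s_def)
  have val: "qval (i, a, b, c) = real_of_int m + real_of_int n * t"
    unfolding qval_eq p0 p1 p2 m_def n_def by (simp add: algebra_simps)
  have f0: "F i \<ge> 0" "F (Suc i) \<ge> 0" "F (Suc (Suc i)) \<ge> 1" "F (Suc (Suc (Suc i))) \<ge> 1"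
    using F_nonneg F_pos by auto
  have A: "int a * F i \<ge> 0" "int b * F (Suc i) \<ge> 0" "int c * F (Suc (Suc i)) \<ge> 0"
    "int a * F (Suc i) \<ge> 0" "int c * F (Suc (Suc (Suc i))) \<ge> 0"
    using f0 by auto
  have Y: "int b * F (Suc (Suc i)) \<ge> 1"
  proof -
    have "int b * F (Suc (Suc i)) \<ge> 1 * 1" using b f0 by (intro mult_mono) auto
    then show ?thesis by simp
  qed
  have X: "int a * F (Suc i) + int c * F (Suc (Suc (Suc i))) \<ge> 1"
  proof (cases "i \<ge> 1")
    case True
    then have "F (Suc i) \<ge> 1" using F_pos by simp
    then have "int a * F (Suc i) \<ge> 1 * 1" using a by (intro mult_mono) auto
    then show ?thesis using A by simp
  next
    case False
    then have "c \<ge> 1" using ic by simp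
    then have "int c * F (Suc (Suc (Suc i))) \<ge> 1 * 1" using f0 by (intro mult_mono) auto
    then show ?thesis using A by simp
  qed
  have mb: "\<bar>m\<bar> \<le> int d1"
  proof -
    have "\<bar>m\<bar> = \<bar>int a * F i - int b * F (Suc i) + int c * F (Suc (Suc i))\<bar>"
      unfolding m_def abs_mult sabs by simp
    also have "\<dots> \<le> int d1" using A d1 qd_F(1)[of i a b c] by (simp add: abs_le_iff)
    finally show ?thesis .
  qed
  have nb: "\<bar>n\<bar> \<le> int d2 - 1"
  proof -
    have "\<bar>n\<bar> = \<bar>- int a * F (Suc i) + int b * F (Suc (Suc i)) - int c * F (Suc (Suc (Suc i)))\<bar>"
      unfolding n_def abs_mult sabs by simp
    also have "\<dots> \<le> int d2 - 1" using A X Y d2 qd_F(2)[of i a b c] by (simp add: abs_le_iff)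
    finally show ?thesis .
  qed
  show ?thesis using val mb nb unfolding t_def by blast
qed


theorem mainTheorem18:
  fixes d1 d2 :: nat
  assumes "(d1, d2) \<noteq> (0, 0)"
  shows "finite (Qd d1 d2) \<and> Qd d1 d2 \<noteq> {} \<and> inj_on qsize (Qd d1 d2) \<and>
    (\<exists>qmax \<in> Qd d1 d2. \<exists>qmin \<in> Qd d1 d2.
       qsize ` Qd d1 d2 = {qsize qmin .. qsize qmax} \<and>
       (\<forall>q \<in> Qd d1 d2. qval q > 0) \<and>
       (\<forall>q \<in> Qd d1 d2. \<forall>q' \<in> Qd d1 d2. qsize q < qsize q' \<longrightarrow> qval q < qval q') \<and>
       qsize qmax = d1 + d2 \<and>
       qval qmax = real d1 + real d2 * gam powi (-1) \<and>
       qval qmin = \<bar>real d1 - real d2 * gam powi (-1)\<bar> \<and>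
       (\<forall>q \<in> Qd d1 d2 - {qmax, qmin}. \<exists>m n :: int.
          qval q = real_of_int m + real_of_int n * gam powi (-1) \<and>
          \<bar>m\<bar> \<le> int d1 \<and> \<bar>n\<bar> \<le> int d2 - 1))"
proof -
  let ?Q = "Qd d1 d2"
  have inj: "inj_on qsize ?Q"
  proof (rule inj_onI)
    fix q q' assume h: "q \<in> ?Q" "q' \<in> ?Q" "qsize q = qsize q'"
    show "q = q'"
    proof (rule ccontr)
      assume "q \<noteq> q'"
      then have "(qsize q' < qsize q \<and> qval q' < qval q) \<or> (qsize q < qsize q' \<and> qval q < qval q')"
        using mono_gen[of q d1 d2 q'] h by blast
      then show False using h(3) by auto
    qed
  qed
  have mono: "\<forall>q \<in> ?Q. \<forall>q' \<in> ?Q. qsize q < qsize q' \<longrightarrow> qval q < qval q'"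
  proof (intro ballI impI)
    fix q q' assume h: "q \<in> ?Q" "q' \<in> ?Q" "qsize q < qsize q'"
    then have "q \<noteq> q'" by auto
    then have "(qsize q' < qsize q \<and> qval q' < qval q) \<or> (qsize q < qsize q' \<and> qval q < qval q')"
      using mono_gen[of q d1 d2 q'] h by blast
    then show "qval q < qval q'" using h(3) by auto
  qed
  have bound: "qsize q \<le> d1 + d2" if "q \<in> ?Q" for q
  proof -
    obtain i a b c where "q = (i, a, b, c)" by (cases q) auto
    then show ?thesis using size_bound[of i a b c d1 d2] that by simp
  qed
  have fin: "finite ?Q"
  proof -
    have "qsize ` ?Q \<subseteq> {..d1 + d2}" using bound by blast
    then have "finite (qsize ` ?Q)" by (rule finite_subset) simp
    then show ?thesis by (rule finite_imageD[OF _ inj])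
  qed
  define qmax where "qmax = (if d1 \<ge> 1 then (0::nat, d1, d2, 0::nat) else (1, d2, 0, 0))"
  have qmax_in: "qmax \<in> ?Q"
    using assms by (auto simp: qmax_def Qd_iff)
  have qmax_size: "qsize qmax = d1 + d2"
    using assms by (auto simp: qmax_def qsize_def)
  have qmax_val: "qval qmax = real d1 + real d2 * gam powi (-1)"
    by (auto simp: qmax_def qval_eq t_def)
  have ne: "?Q \<noteq> {}" using qmax_in by blast
  have pos: "\<forall>q \<in> ?Q. qval q > 0"
  proof
    fix q assume "q \<in> ?Q"
    obtain i a b c where qq: "q = (i, a, b, c)" by (cases q) auto
    have "a \<ge> 1" using \<open>q \<in> ?Q\<close> qq by (simp add: Qd_iff)
    then have "real a * t ^ i > 0" using t_pos by simp
    moreover have "real b * t ^ Suc i \<ge> 0" "real c * t ^ Suc (Suc i) \<ge> 0" using t_pos by simp_all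
    ultimately show "qval q > 0" unfolding qq qval_eq by linarith
  qed
  obtain qmin where qmin_in: "qmin \<in> ?Q" and qmin_min: "\<And>q. q \<in> ?Q \<Longrightarrow> qsize qmin \<le> qsize q"
  proof -
    have "Min (qsize ` ?Q) \<in> qsize ` ?Q" using fin ne by (intro Min_in) auto
    then obtain qm where qm2: "Min (qsize ` ?Q) = qsize qm" and qm1: "qm \<in> ?Q" by (rule imageE)
    show ?thesis
    proof (rule that[OF qm1])
      fix q assume "q \<in> ?Q"
      then have "Min (qsize ` ?Q) \<le> qsize q" using fin by (intro Min_le) auto
      then show "qsize qm \<le> qsize q" using qm2 by simp
    qed
  qed
  obtain i0 a0 b0 c0 where qm: "qmin = (i0, a0, b0, c0)" by (cases qmin) auto
  have b00: "b0 = 0"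
  proof (rule ccontr)
    assume "b0 \<noteq> 0"
    then obtain q'' where "q'' \<in> ?Q" "qsize q'' + 1 = qsize qmin"
      using smaller[of i0 a0 b0 c0 d1 d2] qmin_in unfolding qm by fastforce
    then show False using qmin_min[of q''] by simp
  qed
  have qmin_val: "qval qmin = \<bar>real d1 - real d2 * gam powi (-1)\<bar>"
  proof -
    from qmin_in qm b00 have v: "V (int d1) (int d2) i0 = int c0" by (simp add: Qd_iff)
    have "qval qmin = AA (int d1) (int d2) i0 - 2 * real c0 * t ^ Suc i0"
      using q_val[of i0 a0 b0 c0 d1 d2] qmin_in qm by simp
    also have "\<dots> = t ^ i0 * (of_int (U (int d1) (int d2) i0) - of_int (V (int d1) (int d2) i0) * t)"
      unfolding AA_def v by (simp add: algebra_simps)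
    also have "\<dots> = (-1) ^ i0 * (real d1 - real d2 * t)" by (simp add: conj_UV)
    finally have e: "qval qmin = (-1) ^ i0 * (real d1 - real d2 * t)" .
    have "qval qmin > 0" using pos qmin_in by blast
    then have "qval qmin = \<bar>qval qmin\<bar>" by simp
    also have "\<dots> = \<bar>real d1 - real d2 * t\<bar>" unfolding e abs_mult by (simp add: power_abs)
    finally show ?thesis by (simp add: t_def)
  qed
  have img: "qsize ` ?Q = {qsize qmin .. qsize qmax}"
  proof
    show "qsize ` ?Q \<subseteq> {qsize qmin .. qsize qmax}"
      using qmin_min bound qmax_size by auto
  next
    have step: "\<forall>n. n \<le> qsize qmax - qsize qmin \<longrightarrow> qsize qmax - n \<in> qsize ` ?Q"
    proof
      fix n show "n \<le> qsize qmax - qsize qmin \<longrightarrow> qsize qmax - n \<in> qsize ` ?Q"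
      proof (induction n)
        case 0 then show ?case using qmax_in by simp
      next
        case (Suc n)
        show ?case
        proof
          assume le: "Suc n \<le> qsize qmax - qsize qmin"
          then obtain q where q: "q \<in> ?Q" "qsize q = qsize qmax - n" using Suc by auto
          obtain i a b c where qq: "q = (i, a, b, c)" by (cases q) auto
          have gt: "qsize qmin < qsize q" using q le by simp
          have "b \<noteq> 0"
          proof
            assume "b = 0"
            then show False using b0_min[of i a c d1 d2 qmin] q qq qmin_in gt by simp
          qed
          then obtain q'' where "q'' \<in> ?Q" "qsize q'' + 1 = qsize q"
            using smaller[of i a b c d1 d2] q qq by auto
          then show "qsize qmax - Suc n \<in> qsize ` ?Q" using q by force
        qed
      qed
    qed
    show "{qsize qmin .. qsize qmax} \<subseteq> qsize ` ?Q"
    proof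
      fix s assume "s \<in> {qsize qmin .. qsize qmax}"
      then have "qsize qmax - s \<le> qsize qmax - qsize qmin" "qsize qmax - (qsize qmax - s) = s" by auto
      then show "s \<in> qsize ` ?Q" using step by metis
    qed
  qed
  have last: "\<forall>q \<in> ?Q - {qmax, qmin}. \<exists>m n :: int.
          qval q = real_of_int m + real_of_int n * gam powi (-1) \<and>
          \<bar>m\<bar> \<le> int d1 \<and> \<bar>n\<bar> \<le> int d2 - 1"
  proof
    fix q assume qin: "q \<in> ?Q - {qmax, qmin}"
    obtain i a b c where qq: "q = (i, a, b, c)" by (cases q) auto
    have b: "b \<ge> 1"
    proof (rule ccontr)
      assume "\<not> b \<ge> 1"
      then have "b = 0" by simp
      then have "qsize q \<le> qsize qmin" using b0_min[of i a c d1 d2 qmin] qin qq qmin_in by simp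
      then have "qsize q = qsize qmin" using qmin_min qin by (simp add: le_antisym)
      then have "q = qmin" using inj qin qmin_in by (auto simp: inj_on_def)
      then show False using qin by simp
    qed
    have ic: "i \<ge> 1 \<or> c \<ge> 1"
    proof (rule ccontr)
      assume "\<not> (i \<ge> 1 \<or> c \<ge> 1)"
      then have "i = 0" "c = 0" by auto
      then have "q = qmax" using qin qq by (auto simp: Qd_iff qmax_def)
      then show False using qin by simp
    qed
    show "\<exists>m n :: int. qval q = real_of_int m + real_of_int n * gam powi (-1) \<and>
          \<bar>m\<bar> \<le> int d1 \<and> \<bar>n\<bar> \<le> int d2 - 1"
      using mn_repr[of i a b c d1 d2] qin qq b ic by simp
  qed
  show ?thesis
    apply (intro conjI fin ne inj)
    apply (rule bexI[OF _ qmax_in])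
    apply (rule bexI[OF _ qmin_in])
    using img pos mono qmax_size qmax_val qmin_val last by (intro conjI)
qed

end
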